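(* Let $\rho\in(0,1)$, $\xi\in\mathbb{R}$, and $H=\frac{1}{2(1-\rho\cos x)}\big(\sin^2x\,(P_x^2+P_y^2)+\xi\big)$ on $(x,y)\in(0,\pi)\times\mathbb{R}$. On a level set $H=E\ne0$, $P_y=L>0$, set $\sigma=\frac1\rho\big(\frac{\xi}{2E}-1\big)$ and $\eta=\frac{\rho E}{L^2}$, and suppose $\eta>0$ and $\sigma=-\cosh\theta\le-1$. Then the projections to the $(x,y)$-plane of the trajectories of the Hamiltonian flow on this level set, normalized by a translation in $y$, are: (a) if $\eta\in(0,e^{-\theta})$: $\cosh y=\frac{\cos x-\eta}{\sqrt{\eta^2+2\sigma\eta+1}}$ for $x\in(0,x_-)$, and $\cosh y=\frac{\eta-\cos x}{\sqrt{\eta^2+2\sigma\eta+1}}$ for $x\in(x_+,\pi)$, where $\cos x_\pm=\eta\mp\sqrt{\eta^2+2\sigma\eta+1}$; (b) if $\eta\in(e^{-\theta},+\infty)$: $e^{\epsilon y_\epsilon}=\dfrac{\eta-\cos x+\sqrt{2\eta(|\sigma|-\cos x)-\sin^2x}}{\eta-1+\sqrt{2\eta(|\sigma|-1)}}$ for $x\in(0,\pi)$; (c) if $\eta=e^{-\theta}=\cos x_*$: $e^{\epsilon y_\epsilon}=\frac{\cos x-\cos x_*}{1-\cos x_*}$ for $x\in(0,x_* )$ and $e^{\epsilon y_\epsilon}=\frac{\cos x_*-\cos x}{\cos x_*+1}$ for $x\in(x_*,\pi)$; where $\epsilon=\pm1$ labels the two families of trajectories $y_\epsilon$.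
   Context: Trajectories are solutions of Hamilton's equations of $H$; because $H$ is invariant under $y\mapsto y+c$, each trajectory is given up to a translation of $y$, fixed here by taking $y=0$ at a turning point or at an endpoint $x\to0^+$ or $x\to\pi^-$ of the $x$-interval. *)

theory Defs
  imports "HOL-Analysis.Analysis"
begin

definition Ham :: "real \<Rightarrow> real \<Rightarrow> real \<Rightarrow> real \<Rightarrow> real \<Rightarrow> real \<Rightarrow> real" where
  "Ham \<rho> \<xi> x y px py = (sin x ^ 2 * (px ^ 2 + py ^ 2) + \<xi>) / (2 * (1 - \<rho> * cos x))"

definition hamiltonian_trajectory ::
  "(real \<Rightarrow> real \<Rightarrow> real \<Rightarrow> real \<Rightarrow> real) \<Rightarrow> real set \<Rightarrow>
   (real \<Rightarrow> real) \<Rightarrow> (real \<Rightarrow> real) \<Rightarrow> (real \<Rightarrow> real) \<Rightarrow> (real \<Rightarrow> real) \<Rightarrow> bool" where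
  "hamiltonian_trajectory H I x y px py \<longleftrightarrow> open I \<and> is_interval I \<and>
     (\<forall>t\<in>I.
        (x has_real_derivative deriv (\<lambda>p. H (x t) (y t) p (py t)) (px t)) (at t) \<and>
        (y has_real_derivative deriv (\<lambda>q. H (x t) (y t) (px t) q) (py t)) (at t) \<and>
        (px has_real_derivative - deriv (\<lambda>u. H u (y t) (px t) (py t)) (x t)) (at t) \<and>
        (py has_real_derivative - deriv (\<lambda>v. H (x t) v (px t) (py t)) (y t)) (at t))"

end

theory Submission imports Defs begin
lemma Ham_dp:
  assumes M: "M = 1 - \<rho> * cos a" "M \<noteq> 0"
  shows "deriv (\<lambda>p. Ham \<rho> \<xi> a b p q) p0 = sin a ^ 2 * p0 / M"
proof (rule DERIV_imp_deriv)
  show "((\<lambda>p. Ham \<rho> \<xi> a b p q) has_real_derivative sin a ^ 2 * p0 / M) (at p0)"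
    unfolding Ham_def
    apply (rule derivative_eq_intros refl)+
    unfolding M(1)[symmetric] using M(2) by (auto simp: field_simps power2_eq_square)
qed

lemma Ham_dq:
  assumes M: "M = 1 - \<rho> * cos a" "M \<noteq> 0"
  shows "deriv (\<lambda>q. Ham \<rho> \<xi> a b p q) q0 = sin a ^ 2 * q0 / M"
proof (rule DERIV_imp_deriv)
  show "((\<lambda>q. Ham \<rho> \<xi> a b p q) has_real_derivative sin a ^ 2 * q0 / M) (at q0)"
    unfolding Ham_def
    apply (rule derivative_eq_intros refl)+
    unfolding M(1)[symmetric] using M(2) by (auto simp: field_simps power2_eq_square)
qed

lemma Ham_dx:
  assumes M: "M = 1 - \<rho> * cos a" "M \<noteq> 0"
  shows "deriv (\<lambda>u. Ham \<rho> \<xi> u b p q) a =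
     (sin a * cos a * (p^2 + q^2) - \<rho> * sin a * Ham \<rho> \<xi> a b p q) / M"
proof (rule DERIV_imp_deriv)
  show "((\<lambda>u. Ham \<rho> \<xi> u b p q) has_real_derivative
     (sin a * cos a * (p^2 + q^2) - \<rho> * sin a * Ham \<rho> \<xi> a b p q) / M) (at a)"
    unfolding Ham_def
    apply (rule derivative_eq_intros refl)+
    unfolding M(1)[symmetric] using M(2) by (auto simp: field_simps power2_eq_square)
qed

lemma sign_const:
  fixes f :: "real \<Rightarrow> real"
  assumes "is_interval I" "continuous_on I f" "\<forall>t\<in>I. f t \<noteq> 0"
  shows "(\<forall>t\<in>I. f t > 0) \<or> (\<forall>t\<in>I. f t < 0)"
proof (rule ccontr)
  assume "\<not> ?thesis"
  then obtain a b where ab: "a \<in> I" "b \<in> I" "f a \<le> 0" "f b \<ge> 0" by (auto simp: not_less)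
  have "connected (f ` I)"
    using assms(1,2) connected_continuous_image is_interval_connected_1 by blast
  hence "is_interval (f ` I)" by (simp add: is_interval_connected_1)
  hence "0 \<in> f ` I" using ab by (meson imageI mem_is_interval_1_I)
  thus False using assms(3) by auto
qed

lemma exp_shift:
  fixes s A :: real
  assumes "s \<in> {-1, 1}" "A > 0"
  shows "\<exists>c. \<forall>z. exp (s * (z + c)) = exp (s * z) * A"
proof
  have s2: "s * s = 1" using assms(1) by auto
  show "\<forall>z. exp (s * (z + s * ln A)) = exp (s * z) * A"
    using assms(2) by (simp add: distrib_left mult.assoc[symmetric] s2 exp_add)
qed

lemma cosh_real: "cosh (z::real) = (exp z + exp (- z)) / 2"
  by (simp add: cosh_def)


lemma alg_zero:
  fixes M L s S C p \<eta> :: real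
  assumes "M \<noteq> 0" "L \<noteq> 0" "s \<in> {-1, 1}"
  shows "S * (S^2 * p / M) + s * ((C * (S^2 * p / M) * p + S * (-((S * C * (p^2 + L^2) - S * (\<eta> * L^2)) / M))) / L)
     - s * (S^2 * L / M) * (\<eta> - C + s * (S * p / L)) = 0"
  using assms by (auto simp: field_simps power2_eq_square)

lemma alg2:
  fixes M L s S C p \<eta> e Y :: real
  assumes "M \<noteq> 0" "L \<noteq> 0" "s \<in> {-1, 1}"
  shows "(0 - - S * (S^2 * p / M) + (0 * (S * p / L) + ((C * (S^2 * p / M) * p + - ((S * C * (p^2 + L^2) - S * (\<eta> * L^2)) / M) * S) * L - S * p * 0) / (L * L) * s)) * e + e * (0 * Y + S^2 * L / M * - s) * (\<eta> - C + s * (S * p / L)) = 0"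
  using assms by (auto simp: field_simps power2_eq_square)

theorem proposition5:
  fixes \<rho> \<xi> E L \<theta> :: real
    and I :: "real set"
    and x y px py :: "real \<Rightarrow> real"
  assumes rho: "0 < \<rho>" "\<rho> < 1"
    and E: "E \<noteq> 0"
    and L: "L > 0"
    and traj: "hamiltonian_trajectory (Ham \<rho> \<xi>) I x y px py"
    and dom: "\<forall>t\<in>I. 0 < x t \<and> x t < pi"
    and level: "\<forall>t\<in>I. Ham \<rho> \<xi> (x t) (y t) (px t) (py t) = E \<and> py t = L"
    and eta_pos: "\<rho> * E / L ^ 2 > 0"
    and theta: "\<theta> \<ge> 0" "(\<xi> / (2 * E) - 1) / \<rho> = - cosh \<theta>"
  shows
   "(let \<sigma> = (\<xi> / (2 * E) - 1) / \<rho>; \<eta> = \<rho> * E / L ^ 2;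
         D = \<eta> ^ 2 + 2 * \<sigma> * \<eta> + 1;
         xm = arccos (\<eta> + sqrt D); xp = arccos (\<eta> - sqrt D); xs = arccos \<eta>
     in
      (\<eta> < exp (- \<theta>) \<longrightarrow>
         (\<exists>c. (\<forall>t\<in>I. x t \<le> xm \<and> cosh (y t + c) = (cos (x t) - \<eta>) / sqrt D) \<or>
              (\<forall>t\<in>I. xp \<le> x t \<and> cosh (y t + c) = (\<eta> - cos (x t)) / sqrt D))) \<and>
      (\<eta> > exp (- \<theta>) \<longrightarrow>
         (\<exists>\<epsilon>\<in>{-1, 1}. \<exists>c. \<forall>t\<in>I.
            exp (\<epsilon> * (y t + c)) =
              (\<eta> - cos (x t) + sqrt (2 * \<eta> * (\<bar>\<sigma>\<bar> - cos (x t)) - sin (x t) ^ 2))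
              / (\<eta> - 1 + sqrt (2 * \<eta> * (\<bar>\<sigma>\<bar> - 1))))) \<and>
      (\<eta> = exp (- \<theta>) \<longrightarrow> (\<forall>t\<in>I. x t \<noteq> xs) \<longrightarrow>
         (\<exists>\<epsilon>\<in>{-1, 1}. \<exists>c.
            (\<forall>t\<in>I. x t < xs \<and> exp (\<epsilon> * (y t + c)) = (cos (x t) - cos xs) / (1 - cos xs)) \<or>
            (\<forall>t\<in>I. xs < x t \<and> exp (\<epsilon> * (y t + c)) = (cos xs - cos (x t)) / (cos xs + 1)))))"
proof -
  define \<sigma> where "\<sigma> = (\<xi> / (2 * E) - 1) / \<rho>"
  define \<eta> where "\<eta> = \<rho> * E / L ^ 2"
  define D where "D = \<eta> ^ 2 + 2 * \<sigma> * \<eta> + 1"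
  have \<sigma>c: "\<sigma> = - cosh \<theta>" using theta(2) \<sigma>_def by simp
  have \<eta>pos: "\<eta> > 0" using eta_pos \<eta>_def by simp
  have \<xi>eq: "\<xi> = 2 * E * (1 + \<rho> * \<sigma>)" using \<sigma>_def rho E by (simp add: field_simps)
  have \<eta>L: "\<rho> * E = \<eta> * L ^ 2" using \<eta>_def L by simp
  from traj have Iopen: "open I" and Iint: "is_interval I"
    and dd: "\<forall>t\<in>I.
        (x has_real_derivative deriv (\<lambda>p. Ham \<rho> \<xi> (x t) (y t) p (py t)) (px t)) (at t) \<and>
        (y has_real_derivative deriv (\<lambda>q. Ham \<rho> \<xi> (x t) (y t) (px t) q) (py t)) (at t) \<and>
        (px has_real_derivative - deriv (\<lambda>u. Ham \<rho> \<xi> u (y t) (px t) (py t)) (x t)) (at t)"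
    unfolding hamiltonian_trajectory_def by auto
  have Mpos: "1 - \<rho> * cos (x t) > 0" for t
  proof -
    have "\<rho> * cos (x t) \<le> \<rho> * 1" using rho by (intro mult_left_mono) auto
    thus ?thesis using rho by linarith
  qed
  have xd: "(x has_real_derivative sin (x t)^2 * px t / (1 - \<rho> * cos (x t))) (at t)" if t: "t \<in> I" for t
  proof -
    have "deriv (\<lambda>p. Ham \<rho> \<xi> (x t) (y t) p (py t)) (px t) = sin (x t)^2 * px t / (1 - \<rho> * cos (x t))"
      by (rule Ham_dp) (use Mpos[of t] in auto)
    with dd t show ?thesis by auto
  qed
  have yd: "(y has_real_derivative sin (x t)^2 * L / (1 - \<rho> * cos (x t))) (at t)" if t: "t \<in> I" for t
  proof -
    have "deriv (\<lambda>q. Ham \<rho> \<xi> (x t) (y t) (px t) q) (py t) = sin (x t)^2 * py t / (1 - \<rho> * cos (x t))"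
      by (rule Ham_dq) (use Mpos[of t] in auto)
    with dd t level show ?thesis by auto
  qed
  have pd: "(px has_real_derivative
      -((sin (x t) * cos (x t) * (px t ^ 2 + L ^ 2) - sin (x t) * (\<eta> * L ^ 2)) / (1 - \<rho> * cos (x t)))) (at t)"
    if t: "t \<in> I" for t
  proof -
    have "deriv (\<lambda>u. Ham \<rho> \<xi> u (y t) (px t) (py t)) (x t) =
       (sin (x t) * cos (x t) * (px t ^ 2 + py t ^ 2) - \<rho> * sin (x t) * Ham \<rho> \<xi> (x t) (y t) (px t) (py t)) / (1 - \<rho> * cos (x t))"
      by (rule Ham_dx) (use Mpos[of t] in auto)
    moreover have "\<rho> * sin (x t) * E = sin (x t) * (\<eta> * L ^ 2)" using \<eta>L by (simp add: algebra_simps)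
    moreover have "Ham \<rho> \<xi> (x t) (y t) (px t) (py t) = E" "py t = L" using level t by auto
    ultimately have "- deriv (\<lambda>u. Ham \<rho> \<xi> u (y t) (px t) (py t)) (x t) =
      -((sin (x t) * cos (x t) * (px t ^ 2 + L ^ 2) - sin (x t) * (\<eta> * L ^ 2)) / (1 - \<rho> * cos (x t)))"
      by (simp add: mult.assoc)
    with dd t show ?thesis by metis
  qed
  have xc: "continuous_on I x"
    using xd by (intro continuous_at_imp_continuous_on) (auto intro: DERIV_isCont)
  have pc: "continuous_on I px"
    using pd by (intro continuous_at_imp_continuous_on) (auto intro: DERIV_isCont)
  define P where "P = (\<lambda>t. sin (x t) * px t / L)"
  define N where "N = (\<lambda>s t. \<eta> - cos (x t) + s * P t)"
  have Pc: "continuous_on I P"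
    unfolding P_def by (intro continuous_intros xc pc) (use L in auto)
  have energy: "P t ^ 2 = -2 * \<eta> * (\<sigma> + cos (x t)) - sin (x t) ^ 2" if t: "t \<in> I" for t
  proof -
    have "Ham \<rho> \<xi> (x t) (y t) (px t) (py t) = E" "py t = L" using level t by auto
    hence "(sin (x t) ^ 2 * (px t ^ 2 + L ^ 2) + \<xi>) / (2 * (1 - \<rho> * cos (x t))) = E"
      unfolding Ham_def by simp
    hence h: "sin (x t) ^ 2 * (px t ^ 2 + L ^ 2) + \<xi> = 2 * E * (1 - \<rho> * cos (x t))"
      using Mpos[of t] by (simp add: field_simps)
    have "P t ^ 2 * L ^ 2 = sin (x t) ^ 2 * px t ^ 2"
      unfolding P_def using L by (simp add: field_simps)
    also have "\<dots> = 2 * E * (1 - \<rho> * cos (x t)) - \<xi> - L^2 * sin (x t) ^ 2" using h by (simp add: algebra_simps)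
    also have "\<dots> = -2 * (\<rho> * E) * (\<sigma> + cos (x t)) - L^2 * sin (x t) ^ 2"
      unfolding \<xi>eq by (simp add: algebra_simps)
    also have "\<dots> = (-2 * \<eta> * (\<sigma> + cos (x t)) - sin (x t) ^ 2) * L ^ 2"
      unfolding \<eta>L by (simp add: algebra_simps)
    finally show ?thesis using L by simp
  qed
  have prod: "N 1 t * N (-1) t = D" if t: "t \<in> I" for t
  proof -
    have "N 1 t * N (-1) t = (\<eta> - cos (x t))^2 - P t ^ 2" unfolding N_def by (simp add: algebra_simps power2_eq_square)
    also have "\<dots> = D" unfolding energy[OF t] D_def using sin_squared_eq[of "x t"] by (simp add: algebra_simps power2_eq_square)
    finally show ?thesis .
  qed
  have sum: "N 1 t + N (-1) t = 2 * (\<eta> - cos (x t))" for t unfolding N_def by simp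
  have Lne: "L \<noteq> 0" using L by simp
  have Nexp: "\<exists>C. \<forall>t\<in>I. N s t = C * exp (s * y t)" if s: "s \<in> {-1, 1}" for s
  proof -
    have "\<exists>C. \<forall>t\<in>I. N s t * exp (- s * y t) = C"
    proof (rule has_field_derivative_zero_constant)
      show "convex I" using Iint by (simp add: is_interval_convex)
    next
      fix t assume t: "t \<in> I"
      have "((\<lambda>t. N s t * exp (- s * y t)) has_real_derivative 0) (at t)"
        unfolding N_def P_def
        apply (rule derivative_eq_intros xd[OF t] yd[OF t] pd[OF t] refl Lne)+
        by (rule alg2) (use s Mpos[of t] Lne in auto)
      thus "((\<lambda>t. N s t * exp (- s * y t)) has_real_derivative 0) (at t within I)"
        by (rule has_field_derivative_at_within)
    qed
    then obtain C where C: "\<forall>t\<in>I. N s t * exp (- s * y t) = C" by blast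
    have "\<forall>t\<in>I. N s t = C * exp (s * y t)"
    proof
      fix t assume "t \<in> I"
      with C have "N s t * exp (- s * y t) * exp (s * y t) = C * exp (s * y t)" by simp
      thus "N s t = C * exp (s * y t)" by (simp add: mult.assoc exp_add[symmetric])
    qed
    thus ?thesis by blast
  qed
  have ee: "exp \<theta> * exp (- \<theta>) = 1" by (simp add: exp_minus_inverse)
  have Dfac: "D = (\<eta> - exp \<theta>) * (\<eta> - exp (- \<theta>))"
    unfolding D_def \<sigma>c cosh_real using ee by (simp add: field_simps power2_eq_square)
  have e1: "exp (- \<theta>) \<le> 1" using theta(1) by simp
  have e2: "1 \<le> exp \<theta>" using theta(1) by simp
  have ux: "0 < x t" "x t < pi" "-1 < cos (x t)" "cos (x t) < 1" if t: "t \<in> I" for t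
  proof -
    show "0 < x t" "x t < pi" using dom t by auto
    hence "sin (x t) > 0" by (intro sin_gt_zero)
    hence "sin (x t) ^ 2 > 0" by simp
    hence "cos (x t) ^ 2 < 1" using sin_squared_eq[of "x t"] by linarith
    hence "\<bar>cos (x t)\<bar> < 1" by (simp add: abs_square_less_1)
    thus "-1 < cos (x t)" "cos (x t) < 1" by auto
  qed
  have Pu: "P t ^ 2 = (cos (x t) - \<eta>) ^ 2 - D" if t: "t \<in> I" for t
    unfolding energy[OF t] D_def sin_squared_eq by (simp add: algebra_simps power2_eq_square)
  show ?thesis
    unfolding Let_def \<sigma>_def[symmetric] \<eta>_def[symmetric] D_def[symmetric]
  proof (intro conjI impI)
    assume ha: "\<eta> < exp (- \<theta>)"
    have Dpos: "D > 0" unfolding Dfac using ha e1 e2 by (intro mult_neg_neg) linarith+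
    have sD: "sqrt D > 0" using Dpos by simp
    have sD2: "D = sqrt D * sqrt D" using Dpos by simp
    show "\<exists>c. (\<forall>t\<in>I. x t \<le> arccos (\<eta> + sqrt D) \<and> cosh (y t + c) = (cos (x t) - \<eta>) / sqrt D) \<or>
              (\<forall>t\<in>I. arccos (\<eta> - sqrt D) \<le> x t \<and> cosh (y t + c) = (\<eta> - cos (x t)) / sqrt D)"
    proof (cases "I = {}")
      case True thus ?thesis by simp
    next
      case False then obtain t0 where t0: "t0 \<in> I" by blast
      obtain C1 where C1: "\<forall>t\<in>I. N 1 t = C1 * exp (1 * y t)" using Nexp[of 1] by auto
      obtain C2 where C2: "\<forall>t\<in>I. N (-1) t = C2 * exp (-1 * y t)" using Nexp[of "-1"] by auto
      have CC: "C1 * C2 = D"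
      proof -
        have "D = C1 * exp (y t0) * (C2 * exp (- y t0))" using prod[OF t0] C1 C2 t0 by simp
        also have "\<dots> = C1 * C2 * (exp (y t0) * exp (- y t0))" by simp
        also have "\<dots> = C1 * C2" by (simp add: exp_minus_inverse)
        finally show ?thesis by simp
      qed
      have main: "\<eta> - cos (x t) = (C1 * exp (y t) + C2 * exp (- y t)) / 2" if t: "t \<in> I" for t
        using sum[of t] C1 C2 t by simp
      have C1ne: "C1 \<noteq> 0" using CC Dpos by auto
      have C2p: "C2 = D / C1" using CC C1ne by (simp add: field_simps)
      show ?thesis
      proof (cases "C1 > 0")
        case True
        define a where "a = ln (C1 / sqrt D)"
        have ea: "exp a = C1 / sqrt D" unfolding a_def using True sD by simp
        have ch: "cosh (y t + a) = (\<eta> - cos (x t)) / sqrt D" if t: "t \<in> I" for t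
        proof -
          have "cosh (y t + a) = (exp (y t) * exp a + exp (- y t) / exp a) / 2"
          proof -
            have "exp (- (y t + a)) = exp (- y t) / exp a" by (simp add: exp_diff[symmetric] algebra_simps)
            thus ?thesis unfolding cosh_real by (simp add: exp_add)
          qed
          also have "\<dots> = (\<eta> - cos (x t)) / sqrt D"
            unfolding main[OF t] C2p ea using sD True by (subst (2) sD2) (simp add: field_simps)
          finally show ?thesis .
        qed
        have "\<forall>t\<in>I. arccos (\<eta> - sqrt D) \<le> x t \<and> cosh (y t + a) = (\<eta> - cos (x t)) / sqrt D"
        proof
          fix t assume t: "t \<in> I"
          have "1 \<le> (\<eta> - cos (x t)) / sqrt D" using ch[OF t] cosh_real_ge_1 by metis
          hence le: "cos (x t) \<le> \<eta> - sqrt D" using sD by (simp add: field_simps)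
          have "arccos (\<eta> - sqrt D) \<le> arccos (cos (x t))"
            using le ux[OF t] ha e1 sD by (intro arccos_le_arccos) linarith+
          also have "\<dots> = x t" using ux[OF t] by (intro arccos_cos) auto
          finally show "arccos (\<eta> - sqrt D) \<le> x t \<and> cosh (y t + a) = (\<eta> - cos (x t)) / sqrt D"
            using ch[OF t] by simp
        qed
        thus ?thesis by blast
      next
        case False
        hence Cn: "C1 < 0" using C1ne by simp
        define a where "a = ln (- C1 / sqrt D)"
        have ea: "exp a = - C1 / sqrt D" unfolding a_def using Cn sD by (simp add: divide_neg_pos)
        have ch: "cosh (y t + a) = (cos (x t) - \<eta>) / sqrt D" if t: "t \<in> I" for t
        proof -
          have "cosh (y t + a) = (exp (y t) * exp a + exp (- y t) / exp a) / 2"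
          proof -
            have "exp (- (y t + a)) = exp (- y t) / exp a" by (simp add: exp_diff[symmetric] algebra_simps)
            thus ?thesis unfolding cosh_real by (simp add: exp_add)
          qed
          also have "\<dots> = (cos (x t) - \<eta>) / sqrt D"
          proof -
            obtain r where r: "sqrt D = r" "D = r * r" "r > 0" using Dpos sD sD2 by blast
            have C2q: "C2 = r * r / C1" using C2p r by simp
            have "cos (x t) - \<eta> = - ((C1 * exp (y t) + C2 * exp (- y t)) / 2)" using main[OF t] by linarith
            thus ?thesis unfolding C2q ea r(1) using r(3) Cn
              apply (simp add: field_simps)
              apply (drule arg_cong[where f="\<lambda>z. r * z"])
              by (simp add: algebra_simps)
          qed
          finally show ?thesis .
        qed
        have "\<forall>t\<in>I. x t \<le> arccos (\<eta> + sqrt D) \<and> cosh (y t + a) = (cos (x t) - \<eta>) / sqrt D"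
        proof
          fix t assume t: "t \<in> I"
          have "1 \<le> (cos (x t) - \<eta>) / sqrt D" using ch[OF t] cosh_real_ge_1 by metis
          hence le: "\<eta> + sqrt D \<le> cos (x t)" using sD by (simp add: field_simps)
          have "x t = arccos (cos (x t))" using ux[OF t] by (intro arccos_cos[symmetric]) auto
          also have "\<dots> \<le> arccos (\<eta> + sqrt D)"
            using le ux[OF t] \<eta>pos sD by (intro arccos_le_arccos) linarith+
          finally show "x t \<le> arccos (\<eta> + sqrt D) \<and> cosh (y t + a) = (cos (x t) - \<eta>) / sqrt D"
            using ch[OF t] by simp
        qed
        thus ?thesis by blast
      qed
    qed
  next
    assume hb: "exp (- \<theta>) < \<eta>"
    have abss: "\<bar>\<sigma>\<bar> = cosh \<theta>" unfolding \<sigma>c by simp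
    have Ppos: "P t ^ 2 > 0" if t: "t \<in> I" for t
    proof (cases "D < 0")
      case True
      have "(cos (x t) - \<eta>) ^ 2 \<ge> 0" by simp
      thus ?thesis using Pu[OF t] True by linarith
    next
      case False
      have "\<eta> - exp \<theta> \<ge> 0"
      proof (rule ccontr)
        assume "\<not> ?thesis"
        hence "D < 0" unfolding Dfac using hb by (intro mult_neg_pos) auto
        thus False using False by simp
      qed
      hence h1: "2 * \<eta> - 1 - cos (x t) > 0" using e2 ux[OF t] by linarith
      have h2: "1 - cos (x t) > 0" using ux[OF t] by linarith
      have h3: "2 * \<eta> * (cosh \<theta> - 1) \<ge> 0" using \<eta>pos cosh_real_ge_1[of \<theta>] by simp
      have "P t ^ 2 = 2 * \<eta> * (cosh \<theta> - 1) + (1 - cos (x t)) * (2 * \<eta> - 1 - cos (x t))"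
        unfolding energy[OF t] \<sigma>c sin_squared_eq by (simp add: algebra_simps power2_eq_square)
      moreover have "(1 - cos (x t)) * (2 * \<eta> - 1 - cos (x t)) > 0" using h1 h2 by simp
      ultimately show ?thesis using h3 by linarith
    qed
    have Pne: "\<forall>t\<in>I. P t \<noteq> 0" using Ppos by fastforce
    obtain s where s: "s \<in> {-1, 1}" and sP: "\<forall>t\<in>I. s * P t > 0"
    proof -
      from sign_const[OF Iint Pc Pne] show ?thesis
      proof
        assume "\<forall>t\<in>I. P t > 0" thus ?thesis using that[of 1] by simp
      next
        assume "\<forall>t\<in>I. P t < 0" thus ?thesis using that[of "-1"] by simp
      qed
    qed
    have absP: "\<bar>P t\<bar> = s * P t" if t: "t \<in> I" for t
      using s sP t by auto
    have sq: "sqrt (2 * \<eta> * (\<bar>\<sigma>\<bar> - cos (x t)) - sin (x t) ^ 2) = s * P t" if t: "t \<in> I" for t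
    proof -
      have "2 * \<eta> * (\<bar>\<sigma>\<bar> - cos (x t)) - sin (x t) ^ 2 = P t ^ 2"
        unfolding energy[OF t] abss \<sigma>c by (simp add: algebra_simps)
      thus ?thesis using absP[OF t] by simp
    qed
    have Npos: "N s t > 0" if t: "t \<in> I" for t
    proof (cases "cos (x t) < \<eta>")
      case True thus ?thesis unfolding N_def using sP t by auto
    next
      case False
      have "\<eta> < exp \<theta>" using False ux[OF t] e2 by linarith
      hence Dn: "D < 0" unfolding Dfac using hb by (intro mult_neg_pos) auto
      have "(cos (x t) - \<eta>) ^ 2 < P t ^ 2" using Pu[OF t] Dn by simp
      hence "sqrt ((cos (x t) - \<eta>) ^ 2) < sqrt (P t ^ 2)" by (rule real_sqrt_less_mono)
      hence "cos (x t) - \<eta> < s * P t" using False absP[OF t] by simp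
      thus ?thesis unfolding N_def by simp
    qed
    define K where "K = \<eta> - 1 + sqrt (2 * \<eta> * (\<bar>\<sigma>\<bar> - 1))"
    have Kpos: "K > 0"
    proof (cases "\<eta> > 1")
      case True
      have "2 * \<eta> * (\<bar>\<sigma>\<bar> - 1) \<ge> 0" using abss cosh_real_ge_1[of \<theta>] \<eta>pos by simp
      hence "sqrt (2 * \<eta> * (\<bar>\<sigma>\<bar> - 1)) \<ge> 0" by simp
      thus ?thesis unfolding K_def using True by linarith
    next
      case False
      have "\<eta> \<noteq> exp \<theta>"
      proof
        assume "\<eta> = exp \<theta>"
        hence "exp \<theta> = 1" using False e2 by simp
        hence "\<theta> = 0" by simp
        thus False using hb \<open>\<eta> = exp \<theta>\<close> by simp
      qed
      hence "\<eta> < exp \<theta>" using False e2 by linarith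
      hence Dn: "D < 0" unfolding Dfac using hb by (intro mult_neg_pos) auto
      have "2 * \<eta> * (\<bar>\<sigma>\<bar> - 1) = (1 - \<eta>) ^ 2 - D"
        unfolding abss D_def \<sigma>c by (simp add: algebra_simps power2_eq_square)
      hence "(1 - \<eta>) ^ 2 < 2 * \<eta> * (\<bar>\<sigma>\<bar> - 1)" using Dn by simp
      hence "sqrt ((1 - \<eta>) ^ 2) < sqrt (2 * \<eta> * (\<bar>\<sigma>\<bar> - 1))" by (rule real_sqrt_less_mono)
      thus ?thesis unfolding K_def using False by simp
    qed
    show "\<exists>\<epsilon>\<in>{-1, 1}. \<exists>c. \<forall>t\<in>I. exp (\<epsilon> * (y t + c)) =
              (\<eta> - cos (x t) + sqrt (2 * \<eta> * (\<bar>\<sigma>\<bar> - cos (x t)) - sin (x t) ^ 2))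
              / (\<eta> - 1 + sqrt (2 * \<eta> * (\<bar>\<sigma>\<bar> - 1)))"
    proof (cases "I = {}")
      case True thus ?thesis by (intro bexI[of _ 1]) auto
    next
      case False then obtain t0 where t0: "t0 \<in> I" by blast
      obtain C where C: "\<forall>t\<in>I. N s t = C * exp (s * y t)" using Nexp[OF s] by auto
      have Cp: "C > 0" using Npos[OF t0] C t0 by (simp add: zero_less_mult_iff)
      obtain c where c: "\<forall>z. exp (s * (z + c)) = exp (s * z) * (C / K)"
        using exp_shift[OF s, of "C / K"] Cp Kpos by auto
      have "\<forall>t\<in>I. exp (s * (y t + c)) =
              (\<eta> - cos (x t) + sqrt (2 * \<eta> * (\<bar>\<sigma>\<bar> - cos (x t)) - sin (x t) ^ 2))
              / (\<eta> - 1 + sqrt (2 * \<eta> * (\<bar>\<sigma>\<bar> - 1)))"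
      proof
        fix t assume t: "t \<in> I"
        have "exp (s * (y t + c)) = C * exp (s * y t) / K" using c by simp
        also have "\<dots> = N s t / K" using C t by simp
        finally show "exp (s * (y t + c)) =
              (\<eta> - cos (x t) + sqrt (2 * \<eta> * (\<bar>\<sigma>\<bar> - cos (x t)) - sin (x t) ^ 2))
              / (\<eta> - 1 + sqrt (2 * \<eta> * (\<bar>\<sigma>\<bar> - 1)))"
          unfolding sq[OF t] K_def N_def by simp
      qed
      thus ?thesis using s by blast
    qed
  next
    assume hc: "\<eta> = exp (- \<theta>)" and hx: "\<forall>t\<in>I. x t \<noteq> arccos \<eta>"
    have D0: "D = 0" unfolding Dfac hc by simp
    have \<eta>1: "\<eta> \<le> 1" using hc e1 by simp
    have c\<eta>: "cos (arccos \<eta>) = \<eta>" using \<eta>1 \<eta>pos by simp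
    have xs0: "0 \<le> arccos \<eta>" "arccos \<eta> \<le> pi" using \<eta>1 \<eta>pos by (auto intro: arccos_lbound arccos_ubound)
    have une: "cos (x t) \<noteq> \<eta>" if t: "t \<in> I" for t
    proof
      assume "cos (x t) = \<eta>"
      hence "arccos (cos (x t)) = arccos \<eta>" by simp
      moreover have "arccos (cos (x t)) = x t" using ux[OF t] by (intro arccos_cos) auto
      ultimately show False using hx t by simp
    qed
    obtain s C where s: "s \<in> {-1, 1}" and C: "\<forall>t\<in>I. 2 * (\<eta> - cos (x t)) = C * exp (s * y t)"
    proof -
      obtain C1 where C1: "\<forall>t\<in>I. N 1 t = C1 * exp (1 * y t)" using Nexp[of 1] by auto
      show ?thesis
      proof (cases "C1 = 0")
        case True
        obtain C2 where C2: "\<forall>t\<in>I. N (-1) t = C2 * exp (-1 * y t)" using Nexp[of "-1"] by auto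
        have "\<forall>t\<in>I. 2 * (\<eta> - cos (x t)) = C2 * exp (-1 * y t)"
          using C1 C2 sum True by (metis add_0 mult_zero_left)
        thus ?thesis using that[of "-1" C2] by simp
      next
        case False
        have "\<forall>t\<in>I. 2 * (\<eta> - cos (x t)) = C1 * exp (1 * y t)"
        proof
          fix t assume t: "t \<in> I"
          have "N 1 t \<noteq> 0" using C1 t False by simp
          hence "N (-1) t = 0" using prod[OF t] D0 by simp
          thus "2 * (\<eta> - cos (x t)) = C1 * exp (1 * y t)" using sum[of t] C1 t by simp
        qed
        thus ?thesis using that[of 1 C1] by simp
      qed
    qed
    show "\<exists>\<epsilon>\<in>{-1, 1}. \<exists>c.
            (\<forall>t\<in>I. x t < arccos \<eta> \<and> exp (\<epsilon> * (y t + c)) = (cos (x t) - cos (arccos \<eta>)) / (1 - cos (arccos \<eta>))) \<or>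
            (\<forall>t\<in>I. arccos \<eta> < x t \<and> exp (\<epsilon> * (y t + c)) = (cos (arccos \<eta>) - cos (x t)) / (cos (arccos \<eta>) + 1))"
    proof -
    have G: "\<exists>\<epsilon>\<in>{-1, 1}. \<exists>c.
            (\<forall>t\<in>I. x t < arccos \<eta> \<and> exp (\<epsilon> * (y t + c)) = (cos (x t) - \<eta>) / (1 - \<eta>)) \<or>
            (\<forall>t\<in>I. arccos \<eta> < x t \<and> exp (\<epsilon> * (y t + c)) = (\<eta> - cos (x t)) / (\<eta> + 1))"
    proof (cases "I = {}")
      case True thus ?thesis by (intro bexI[of _ 1]) auto
    next
      case False then obtain t0 where t0: "t0 \<in> I" by blast
      have Cne: "C \<noteq> 0" using C t0 une[OF t0] by force
      show ?thesis
      proof (cases "C > 0")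
        case True
        have pos: "\<eta> - cos (x t) > 0" if t: "t \<in> I" for t
        proof -
          have "2 * (\<eta> - cos (x t)) > 0" using C t True by simp
          thus ?thesis by simp
        qed
        obtain c where c: "\<forall>z. exp (s * (z + c)) = exp (s * z) * (C / (2 * (\<eta> + 1)))"
          using exp_shift[OF s, of "C / (2 * (\<eta> + 1))"] True \<eta>pos by auto
        have "\<forall>t\<in>I. arccos \<eta> < x t \<and> exp (s * (y t + c)) = (\<eta> - cos (x t)) / (\<eta> + 1)"
        proof
          fix t assume t: "t \<in> I"
          have "cos (x t) < cos (arccos \<eta>)" using pos[OF t] c\<eta> by simp
          hence "arccos \<eta> < x t" using ux[OF t] xs0 by (subst (asm) cos_mono_less_eq) auto
          moreover have "exp (s * (y t + c)) = (\<eta> - cos (x t)) / (\<eta> + 1)"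
          proof -
            have "exp (s * (y t + c)) = C * exp (s * y t) / (2 * (\<eta> + 1))" using c by simp
            also have "\<dots> = 2 * (\<eta> - cos (x t)) / (2 * (\<eta> + 1))" using C t by simp
            also have "\<dots> = (\<eta> - cos (x t)) / (\<eta> + 1)" using \<eta>pos by (simp add: field_simps)
            finally show ?thesis .
          qed
          ultimately show "arccos \<eta> < x t \<and> exp (s * (y t + c)) = (\<eta> - cos (x t)) / (\<eta> + 1)" by simp
        qed
        thus ?thesis using s by blast
      next
        case False
        hence Cn: "C < 0" using Cne by simp
        have neg: "cos (x t) - \<eta> > 0" if t: "t \<in> I" for t
        proof -
          have "2 * (\<eta> - cos (x t)) < 0" using C t Cn by (simp add: mult_neg_pos)
          thus ?thesis by simp
        qed
        have \<eta>lt: "1 - \<eta> > 0" using neg[OF t0] ux[OF t0] by linarith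
        obtain c where c: "\<forall>z. exp (s * (z + c)) = exp (s * z) * (- C / (2 * (1 - \<eta>)))"
        proof -
          have "- C / (2 * (1 - \<eta>)) > 0" using Cn \<eta>lt by (intro divide_pos_pos) auto
          from exp_shift[OF s this] show ?thesis using that by blast
        qed
        have "\<forall>t\<in>I. x t < arccos \<eta> \<and> exp (s * (y t + c)) = (cos (x t) - \<eta>) / (1 - \<eta>)"
        proof
          fix t assume t: "t \<in> I"
          have "cos (arccos \<eta>) < cos (x t)" using neg[OF t] c\<eta> by simp
          hence "x t < arccos \<eta>" using ux[OF t] xs0 by (subst (asm) cos_mono_less_eq) auto
          moreover have "exp (s * (y t + c)) = (cos (x t) - \<eta>) / (1 - \<eta>)"
          proof -
            have "exp (s * (y t + c)) = - (C * exp (s * y t)) / (2 * (1 - \<eta>))" using c by simp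
            also have "\<dots> = - (2 * (\<eta> - cos (x t))) / (2 * (1 - \<eta>))" using C t by simp
            also have "\<dots> = (cos (x t) - \<eta>) / (1 - \<eta>)" using \<eta>lt by (simp add: field_simps)
            finally show ?thesis .
          qed
          ultimately show "x t < arccos \<eta> \<and> exp (s * (y t + c)) = (cos (x t) - \<eta>) / (1 - \<eta>)" by simp
        qed
        thus ?thesis using s by blast
      qed
    qed
    thus ?thesis unfolding c\<eta> .
    qed
  qed
qed

end
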